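(* Let $\alpha \in (0,\frac{\pi}{2})$ and $\beta \in [0,\alpha]$. Then for all $\theta \in [1,\frac{\pi}{2\alpha})$, \[\Big| \frac{\sin(2\beta)}{\sin(2\alpha)} - \frac{\sin(2\theta\beta)}{\sin(2\theta\alpha)} \Big| \leq \frac{4(\theta-1)\alpha}{\sin(2\alpha)\sin(2\theta\alpha)}.\] *)

theory Defs
  imports Complex_Main
begin

end

theory Submission
  imports Defs
begin

lemma sin_lip: "\<bar>sin (x::real) - sin y\<bar> \<le> \<bar>x - y\<bar>"
proof -
  have "\<bar>sin x - sin y\<bar> = 2 * \<bar>sin ((x - y) / 2)\<bar> * \<bar>cos ((x + y) / 2)\<bar>"
    by (simp add: sin_diff_sin abs_mult)
  also have "\<dots> \<le> 2 * \<bar>(x - y) / 2\<bar> * 1"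
    by (intro mult_mono abs_sin_x_le_abs_x) auto
  finally show ?thesis by simp
qed

theorem propositionB3:
  fixes \<alpha> \<beta> \<theta> :: real
  assumes "0 < \<alpha>" and "\<alpha> < pi / 2"
    and "0 \<le> \<beta>" and "\<beta> \<le> \<alpha>"
    and "1 \<le> \<theta>" and "\<theta> < pi / (2 * \<alpha>)"
  shows "\<bar>sin (2 * \<beta>) / sin (2 * \<alpha>) - sin (2 * \<theta> * \<beta>) / sin (2 * \<theta> * \<alpha>)\<bar>
           \<le> 4 * (\<theta> - 1) * \<alpha> / (sin (2 * \<alpha>) * sin (2 * \<theta> * \<alpha>))"
proof -
  have t: "2 * \<theta> * \<alpha> < pi" using assms(1,6) by (simp add: field_simps)
  have s1: "sin (2 * \<alpha>) > 0" using assms(1,2) by (intro sin_gt_zero) auto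
  have s2: "sin (2 * \<theta> * \<alpha>) > 0" using assms(1,5) t by (intro sin_gt_zero) auto
  define a where "a = sin (2 * \<beta>)"
  define b where "b = sin (2 * \<alpha>)"
  define c where "c = sin (2 * \<theta> * \<beta>)"
  define d where "d = sin (2 * \<theta> * \<alpha>)"
  have e: "a * d - c * b = a * (d - b) + b * (a - c)" by (simp add: algebra_simps)
  have "\<bar>a * (d - b)\<bar> \<le> 1 * \<bar>2 * \<theta> * \<alpha> - 2 * \<alpha>\<bar>"
    unfolding abs_mult a_def d_def b_def by (intro mult_mono sin_lip) auto
  also have "\<dots> = 2 * (\<theta> - 1) * \<alpha>" using assms by (simp add: algebra_simps)
  finally have h1: "\<bar>a * (d - b)\<bar> \<le> 2 * (\<theta> - 1) * \<alpha>" .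
  have "\<bar>b * (a - c)\<bar> \<le> 1 * \<bar>2 * \<beta> - 2 * \<theta> * \<beta>\<bar>"
    unfolding abs_mult a_def c_def b_def by (intro mult_mono sin_lip) auto
  also have "\<dots> = 2 * (\<theta> - 1) * \<beta>"
  proof -
    have "0 \<le> 2 * (\<theta> - 1) * \<beta>" using assms by simp
    moreover have "2 * \<beta> - 2 * \<theta> * \<beta> = - (2 * (\<theta> - 1) * \<beta>)" by (simp add: algebra_simps)
    ultimately show ?thesis by simp
  qed
  also have "\<dots> \<le> 2 * (\<theta> - 1) * \<alpha>" using assms by (intro mult_left_mono) auto
  finally have h2: "\<bar>b * (a - c)\<bar> \<le> 2 * (\<theta> - 1) * \<alpha>" .
  have main: "\<bar>a * d - c * b\<bar> \<le> 4 * (\<theta> - 1) * \<alpha>"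
    using e h1 h2 abs_triangle_ineq[of "a * (d - b)" "b * (a - c)"] by linarith
  have "a / b - c / d = (a * d - c * b) / (b * d)"
    using s1 s2 by (simp add: b_def d_def field_simps)
  hence "\<bar>a / b - c / d\<bar> = \<bar>a * d - c * b\<bar> / (b * d)"
    using s1 s2 by (simp add: b_def d_def abs_divide)
  also have "\<dots> \<le> 4 * (\<theta> - 1) * \<alpha> / (b * d)"
    using s1 s2 main by (intro divide_right_mono) (auto simp: b_def d_def)
  finally show ?thesis by (simp add: a_def b_def c_def d_def)
qed

end
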